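(* Let $n\ge1$ and let $\mathcal A_n$ be the real Lie algebra with basis $\{Y,X_1,\dots,X_n\}$ and brackets $[Y,X_i]=X_i$, $[X_i,X_j]=0$. For every inner product on $\mathcal A_n$, every geodesic element is orthogonal to the derived algebra $\mathcal A_n'=\operatorname{Span}(X_1,\dots,X_n)$; consequently, up to scaling, there is only one geodesic element.
   Context: For an inner product $\langle\cdot,\cdot\rangle$ on a real Lie algebra $\mathfrak g$, a nonzero $X\in\mathfrak g$ is a geodesic element if $\langle X,[X,Z]\rangle=0$ for all $Z\in\mathfrak g$. *)

theory Defs
  imports "HOL-Analysis.Analysis"
begin

text \<open>The Lie algebra A_n: an element (a, v) stands for a Y + sum_i v_i X_i,
  where the index type 'n (finite, nonempty) has CARD('n) = n elements.
  Brackets: [Y, X_i] = X_i, [X_i, X_j] = 0, extended bilinearly and antisymmetrically.\<close>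

type_synonym 'n An = "real \<times> (real ^ 'n)"

definition An_bracket :: "'n::finite An \<Rightarrow> 'n An \<Rightarrow> 'n An" where
  "An_bracket x y = (0, fst x *\<^sub>R snd y - fst y *\<^sub>R snd x)"

definition An_derived :: "'n::finite An set" where
  "An_derived = span {An_bracket x y | x y. True}"

definition is_inner_product :: "('a::real_vector \<Rightarrow> 'a \<Rightarrow> real) \<Rightarrow> bool" where
  "is_inner_product B \<longleftrightarrow> (\<forall>x. linear (B x)) \<and> (\<forall>x y. B x y = B y x)
     \<and> (\<forall>x. x \<noteq> 0 \<longrightarrow> B x x > 0)"

definition geodesic_element :: "('n::finite An \<Rightarrow> 'n An \<Rightarrow> real) \<Rightarrow> 'n An \<Rightarrow> bool" where
  "geodesic_element B X \<longleftrightarrow> X \<noteq> 0 \<and> (\<forall>Z. B X (An_bracket X Z) = 0)"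

end

theory Submission
  imports Defs
begin

lemma ip_facts:
  assumes "is_inner_product B"
  shows "linear (B x)" "B x y = B y x" "x \<noteq> 0 \<Longrightarrow> B x x > 0"
    "linear (\<lambda>x. B x y)"
proof -
  show l: "linear (B x)" "B x y = B y x" "x \<noteq> 0 \<Longrightarrow> B x x > 0"
    using assms unfolding is_inner_product_def by auto
  have "(\<lambda>x. B x y) = B y" using assms unfolding is_inner_product_def by auto
  then show "linear (\<lambda>x. B x y)" using assms unfolding is_inner_product_def by auto
qed

lemma functional_zero:
  fixes g :: "real ^ 'n::finite \<Rightarrow> real"
  assumes "linear g" "\<And>i. g (axis i 1) = 0"
  shows "g w = 0"
proof -
  have "g = (\<lambda>_. 0)"
    apply (rule linear_eq_stdbasis[OF assms(1)])
    using assms(2) by (auto simp: Basis_vec_def linear_zero)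
  then show ?thesis by simp
qed

lemma lin_emb: "linear (\<lambda>w::real^'n. ((0::real), w))"
  by (rule linearI) auto

theorem lemma5p1:
  fixes B :: "'n::finite An \<Rightarrow> 'n An \<Rightarrow> real"
  assumes "is_inner_product B"
  shows "(\<forall>X. geodesic_element B X \<longrightarrow> (\<forall>W\<in>An_derived. B X W = 0))
    \<and> (\<exists>X. geodesic_element B X)
    \<and> (\<forall>X X'. geodesic_element B X \<and> geodesic_element B X' \<longrightarrow> (\<exists>c::real. X' = c *\<^sub>R X))"
proof -
  note ip = ip_facts[OF assms]
  have der: "(An_derived :: 'n An set) \<subseteq> {(0, w) | w. True}"
  proof -
    have s1: "subspace {(0::real, w::real^'n) | w. True}"
      unfolding subspace_def by (auto simp: zero_prod_def)
    have s2: "{An_bracket x y | x y::'n An. True} \<subseteq> {(0, w) | w. True}"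
      by (auto simp: An_bracket_def)
    show ?thesis unfolding An_derived_def by (rule span_minimal[OF s2 s1])
  qed
  have geo: "fst X \<noteq> 0 \<and> (\<forall>w. B X (0, w) = 0)" if g: "geodesic_element B X" for X
  proof -
    obtain a v where X: "X = (a, v)" by (cases X)
    have Xn: "X \<noteq> 0" and h: "\<And>Z. B X (An_bracket X Z) = 0"
      using g unfolding geodesic_element_def by auto
    have a: "a \<noteq> 0"
    proof
      assume "a = 0"
      then have "An_bracket X (1, 0) = - X" using X by (simp add: An_bracket_def)
      then have "B X (- X) = 0" using h[of "(1,0)"] by simp
      then have "B X X = 0" using linear_neg[OF ip(1)[of X]] by simp
      then show False using ip(3)[OF Xn] by simp
    qed
    have "B X (0, w) = 0" for w
    proof -
      have "An_bracket X (0, (1/a) *\<^sub>R w) = (0, w)" using X a by (simp add: An_bracket_def)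
      then show ?thesis using h[of "(0, (1/a) *\<^sub>R w)"] by simp
    qed
    then show ?thesis using X a by simp
  qed
  have P1: "\<forall>X. geodesic_element B X \<longrightarrow> (\<forall>W\<in>An_derived. B X W = 0)"
  proof (intro allI impI ballI)
    fix X W assume g: "geodesic_element B X" and W: "W \<in> (An_derived :: 'n An set)"
    then obtain w where "W = (0, w)" using der by blast
    then show "B X W = 0" using geo[OF g] by simp
  qed
  define L where "L = (\<lambda>v::real^'n. (\<chi> i. B (0, v) (0, axis i 1)))"
  have linL: "linear L"
  proof -
    have h: "linear (\<lambda>v::real^'n. B (0, v) (0, axis i 1))" for i
      using linear_compose[OF lin_emb ip(4)] by (simp add: o_def)
    show ?thesis unfolding L_def
      by (rule linearI) (simp_all add: vec_eq_iff linear_add[OF h] linear_scale[OF h])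
  qed
  have injL: "inj L"
  proof (rule linear_injective_0[OF linL, THEN iffD2], intro allI impI)
    fix v assume "L v = 0"
    then have "B (0, v) (0, axis i 1) = 0" for i
      unfolding L_def by (simp add: vec_eq_iff)
    then have "B (0, v) (0, w) = 0" for w
      using functional_zero[of "\<lambda>w. B (0, v) (0, w)"]
        linear_compose[OF lin_emb ip(1)] by (simp add: o_def)
    then have "B (0, v) (0, v) = 0" by simp
    then have "(0::real, v) = 0" using ip(3)[of "(0, v)"] by (metis less_irrefl)
    then show "v = 0" by (simp add: zero_prod_def)
  qed
  obtain v where v: "L v = (\<chi> i. - B (1, 0) (0, axis i 1))"
    using linear_injective_imp_surjective[OF linL injL] by (metis surjD)
  define X0 :: "'n An" where "X0 = (1, v)"
  have "B X0 (0, axis i 1) = 0" for i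
  proof -
    have e: "X0 = (1, 0) + (0, v)" unfolding X0_def by simp
    have "B ((1, 0) + (0, v)) (0, axis i 1) = B (1, 0) (0, axis i 1) + B (0, v) (0, axis i 1)"
      by (rule linear_add[OF ip(4)])
    then have "B X0 (0, axis i 1) = B (1, 0) (0, axis i 1) + B (0, v) (0, axis i 1)"
      by (subst e)
    also have "B (0, v) (0, axis i 1) = - B (1, 0) (0, axis i 1)"
      using v unfolding L_def by (simp add: vec_eq_iff)
    finally show ?thesis by simp
  qed
  then have X0o: "B X0 (0, w) = 0" for w
    using functional_zero[of "\<lambda>w. B X0 (0, w)"]
      linear_compose[OF lin_emb ip(1)] by (simp add: o_def)
  have P2: "\<exists>X. geodesic_element B X"
    unfolding geodesic_element_def
    by (rule exI[of _ X0]) (auto simp: X0_def An_bracket_def X0o[unfolded X0_def] zero_prod_def)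
  have P3: "\<exists>c::real. X' = c *\<^sub>R X" if g1: "geodesic_element B X" and g2: "geodesic_element B X'" for X X'
  proof -
    obtain a v where X: "X = (a, v)" by (cases X)
    obtain a' v' where X': "X' = (a', v')" by (cases X')
    have a: "a \<noteq> 0" and o1: "\<And>w. B X (0, w) = 0" using geo[OF g1] X by auto
    have o2: "\<And>w. B X' (0, w) = 0" using geo[OF g2] by auto
    define c where "c = a' / a"
    define D where "D = X' - c *\<^sub>R X"
    have D: "D = (0, v' - c *\<^sub>R v)" unfolding D_def c_def using X X' a by simp
    have "B D D = B X' D - c * B X D"
      unfolding D_def using linear_diff[OF ip(4)] linear_scale[OF ip(4)] by simp
    also have "\<dots> = 0" using o1 o2 D by simp
    finally have "B D D = 0" .
    then have "D = 0" using ip(3)[of D] by (metis less_irrefl)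
    then show ?thesis unfolding D_def by auto
  qed
  show ?thesis using P1 P2 P3 by blast
qed

end
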